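(* Let $\mathcal{H}$ be a real Hilbert space with orthonormal basis $(\varphi_\gamma)_{\gamma\in\Gamma}$, $\Gamma=\Gamma_1\cup\dots\cup\Gamma_n$ pairwise disjoint, $p_i\in[1,2]$, $p_\gamma=p_i$ for $\gamma\in\Gamma_i$, and weights $w_\gamma\ge c>0$. For $f\in\mathcal{H}$ let $|||f|||^P_{W,P}=\sum_\gamma w_\gamma|\langle f,\varphi_\gamma\rangle|^{p_\gamma}$. If a sequence $(v_k)$ in $\mathcal{H}$ converges weakly to $v$ and $\lim_{k\to\infty}|||v_k|||^P_{W,P}=|||v|||^P_{W,P}$, then $\lim_{k\to\infty}\|v-v_k\|=0$. *)

theory Defs
  imports "HOL-Analysis.Analysis"
begin

definition weakly_converges :: "(nat \<Rightarrow> 'a::real_inner) \<Rightarrow> 'a \<Rightarrow> bool" where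
  "weakly_converges x v \<longleftrightarrow> (\<forall>y. (\<lambda>k. x k \<bullet> y) \<longlonglongrightarrow> v \<bullet> y)"

definition orthonormal_basis :: "('g \<Rightarrow> 'a::real_inner) \<Rightarrow> 'g set \<Rightarrow> bool" where
  "orthonormal_basis phi Gam \<longleftrightarrow>
     (\<forall>g\<in>Gam. norm (phi g) = 1) \<and>
     (\<forall>g\<in>Gam. \<forall>h\<in>Gam. g \<noteq> h \<longrightarrow> phi g \<bullet> phi h = 0) \<and>
     closure (span (phi ` Gam)) = UNIV"

definition wnorm :: "('g \<Rightarrow> real) \<Rightarrow> ('g \<Rightarrow> real) \<Rightarrow> ('g \<Rightarrow> 'a::real_inner) \<Rightarrow> 'g set \<Rightarrow> 'a \<Rightarrow> ennreal" where
  "wnorm w p phi Gam f = (\<Sum>\<^sub>\<infinity>g\<in>Gam. ennreal (w g * \<bar>f \<bullet> phi g\<bar> powr p g))"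

end

theory Submission imports Defs begin

lemma proj_inner:
  fixes phi :: "'g \<Rightarrow> 'a::real_inner"
  assumes onb: "orthonormal_basis phi Gam" and F: "finite F" "F \<subseteq> Gam" and h: "h \<in> F"
  shows "(\<Sum>g\<in>F. (x \<bullet> phi g) *\<^sub>R phi g) \<bullet> phi h = x \<bullet> phi h"
proof -
  have "(\<Sum>g\<in>F. (x \<bullet> phi g) *\<^sub>R phi g) \<bullet> phi h = (\<Sum>g\<in>F. (x \<bullet> phi g) * (phi g \<bullet> phi h))"
    by (simp add: inner_sum_left)
  also have "\<dots> = (\<Sum>g\<in>F. if g = h then x \<bullet> phi h else 0)"
  proof (rule sum.cong)
    fix g assume g: "g \<in> F"
    show "(x \<bullet> phi g) * (phi g \<bullet> phi h) = (if g = h then x \<bullet> phi h else 0)"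
    proof (cases "g = h")
      case True
      have "norm (phi h) = 1" using onb h F unfolding orthonormal_basis_def by auto
      hence "phi h \<bullet> phi h = 1" by (metis norm_eq_sqrt_inner real_sqrt_eq_1_iff)
      thus ?thesis using True by simp
    next
      case False
      have "phi g \<bullet> phi h = 0" using onb g h F False unfolding orthonormal_basis_def by blast
      thus ?thesis using False by simp
    qed
  qed simp
  also have "\<dots> = x \<bullet> phi h" using F h by simp
  finally show ?thesis .
qed

lemma sq_add: "((a::'a::real_inner) + b) \<bullet> (a + b) = a \<bullet> a + 2 * (a \<bullet> b) + b \<bullet> b"
  by (simp add: inner_add_left inner_add_right inner_commute[of b a])

lemma parseval_le:
  fixes phi :: "'g \<Rightarrow> 'a::real_inner"
  assumes onb: "orthonormal_basis phi Gam"
    and sm: "(\<lambda>g. (x \<bullet> phi g)^2) summable_on Gam"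
  shows "(norm x)^2 \<le> infsum (\<lambda>g. (x \<bullet> phi g)^2) Gam"
proof (rule field_le_epsilon)
  fix e :: real assume e: "e > 0"
  have "x \<in> closure (span (phi ` Gam))" using onb unfolding orthonormal_basis_def by auto
  then obtain y where y: "y \<in> span (phi ` Gam)" and dy: "dist y x < sqrt e"
    using e by (meson closure_approachable real_sqrt_gt_zero)
  then obtain t r where t: "finite t" "t \<subseteq> phi ` Gam" and yt: "y = (\<Sum>a\<in>t. r a *\<^sub>R a)"
    by (auto simp: span_explicit)
  obtain F where F: "F \<subseteq> Gam" "t = phi ` F" "finite F"
    using t by (meson finite_subset_image)
  have yspan: "y \<in> span (phi ` F)" unfolding yt F(2)[symmetric]
    by (intro span_sum span_scale span_base) auto
  define P where "P = (\<Sum>g\<in>F. (x \<bullet> phi g) *\<^sub>R phi g)"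
  have Pspan: "P \<in> span (phi ` F)" unfolding P_def
    by (intro span_sum span_scale span_base) auto
  have orth: "orthogonal (x - P) z" if "z \<in> span (phi ` F)" for z
  proof (rule orthogonal_to_span[OF that])
    fix u assume "u \<in> phi ` F"
    then obtain h where h: "h \<in> F" "u = phi h" by auto
    show "orthogonal (x - P) u" unfolding orthogonal_def h(2) P_def
      using proj_inner[OF onb F(3) F(1) h(1), of x] by (simp add: inner_diff_left)
  qed
  have PP: "P \<bullet> P = (\<Sum>g\<in>F. (x \<bullet> phi g)^2)"
  proof -
    have eq: "(\<Sum>g\<in>F. (x \<bullet> phi g) *\<^sub>R phi g) \<bullet> z = (\<Sum>g\<in>F. (x \<bullet> phi g) * (phi g \<bullet> z))" for z
      by (simp add: inner_sum_left)
    have "P \<bullet> P = (\<Sum>g\<in>F. (x \<bullet> phi g) * (phi g \<bullet> P))"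
      by (subst (1) P_def) (rule eq)
    also have "\<dots> = (\<Sum>g\<in>F. (x \<bullet> phi g)^2)"
    proof (rule sum.cong)
      fix g assume g: "g \<in> F"
      have "phi g \<bullet> P = P \<bullet> phi g" by (rule inner_commute)
      also have "\<dots> = x \<bullet> phi g" unfolding P_def by (rule proj_inner[OF onb F(3) F(1) g])
      finally show "(x \<bullet> phi g) * (phi g \<bullet> P) = (x \<bullet> phi g)^2" by (simp add: power2_eq_square)
    qed simp
    finally show ?thesis .
  qed
  have "x = (x - P) + P" by simp
  have n1: "(norm x)^2 = (norm (x - P))^2 + P \<bullet> P"
  proof -
    have "(x - P) \<bullet> P = 0" using orth[OF Pspan] by (simp add: orthogonal_def)
    hence "x \<bullet> x = (x - P) \<bullet> (x - P) + P \<bullet> P"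
      by (simp add: inner_diff_left inner_diff_right inner_commute)
    thus ?thesis by (simp add: power2_norm_eq_inner)
  qed
  have n2: "(norm (x - P))^2 \<le> (norm (x - y))^2"
  proof -
    have "P - y \<in> span (phi ` F)" using Pspan yspan by (simp add: span_diff)
    hence o: "(x - P) \<bullet> (P - y) = 0" using orth by (simp add: orthogonal_def)
    have "(x - y) \<bullet> (x - y) = ((x - P) + (P - y)) \<bullet> ((x - P) + (P - y))" by simp
    also have "\<dots> = (x - P) \<bullet> (x - P) + 2 * ((x - P) \<bullet> (P - y)) + (P - y) \<bullet> (P - y)"
      by (rule sq_add)
    finally have "(x - y) \<bullet> (x - y) = (x - P) \<bullet> (x - P) + (P - y) \<bullet> (P - y)"
      using o by simp
    moreover have "(P - y) \<bullet> (P - y) \<ge> 0" by simp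
    ultimately show ?thesis by (simp add: power2_norm_eq_inner)
  qed
  have n3: "(norm (x - y))^2 < e"
  proof -
    have "norm (x - y) < sqrt e" using dy by (simp add: dist_norm norm_minus_commute)
    hence "(norm (x - y))^2 < (sqrt e)^2" by (intro power_strict_mono) auto
    thus ?thesis using e by simp
  qed
  have n4: "(\<Sum>g\<in>F. (x \<bullet> phi g)^2) \<le> infsum (\<lambda>g. (x \<bullet> phi g)^2) Gam"
  proof -
    have "(\<Sum>g\<in>F. (x \<bullet> phi g)^2) = infsum (\<lambda>g. (x \<bullet> phi g)^2) F" using F by simp
    also have "\<dots> \<le> infsum (\<lambda>g. (x \<bullet> phi g)^2) Gam"
      by (rule infsum_mono_neutral) (use F sm in auto)
    finally show ?thesis .
  qed
  show "(norm x)^2 \<le> infsum (\<lambda>g. (x \<bullet> phi g)^2) Gam + e"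
    using n1 n2 n3 n4 PP by linarith
qed


lemma enn_fin:
  fixes f :: "'g \<Rightarrow> real"
  assumes nn: "\<And>x. x \<in> A \<Longrightarrow> f x \<ge> 0" and fin: "(\<Sum>\<^sub>\<infinity>x\<in>A. ennreal (f x)) < \<infinity>"
  shows "f summable_on A" and "(\<Sum>\<^sub>\<infinity>x\<in>A. ennreal (f x)) = ennreal (infsum f A)"
proof -
  let ?S = "(\<Sum>\<^sub>\<infinity>x\<in>A. ennreal (f x))"
  have le: "ennreal (sum f F) \<le> ?S" if "finite F" "F \<subseteq> A" for F
  proof -
    have "ennreal (sum f F) = (\<Sum>x\<in>F. ennreal (f x))" using that nn by (intro sum_ennreal[symmetric]) auto
    also have "\<dots> = (\<Sum>\<^sub>\<infinity>x\<in>F. ennreal (f x))" using that by simp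
    also have "\<dots> \<le> ?S" by (rule infsum_mono_neutral) (use that in \<open>auto intro: nonneg_summable_on_complete\<close>)
    finally show ?thesis .
  qed
  show sm: "f summable_on A"
  proof (rule nonneg_bdd_above_summable_on)
    show "bdd_above (sum f ` {F. F \<subseteq> A \<and> finite F})"
    proof (rule bdd_aboveI2)
      fix F assume F: "F \<in> {F. F \<subseteq> A \<and> finite F}"
      hence "ennreal (sum f F) \<le> ?S" using le by auto
      hence "enn2real (ennreal (sum f F)) \<le> enn2real ?S" using fin by (intro enn2real_mono) auto
      moreover have "sum f F \<ge> 0" using F nn by (intro sum_nonneg) auto
      ultimately show "sum f F \<le> enn2real ?S" by simp
    qed
  qed (use nn in auto)
  have "?S = (SUP F\<in>{F. finite F \<and> F\<subseteq>A}. (\<Sum>x\<in>F. ennreal (f x)))"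
    by (rule nonneg_infsum_complete) auto
  also have "\<dots> = (SUP F\<in>{F. finite F \<and> F\<subseteq>A}. ennreal (sum f F))"
    by (rule SUP_cong) (auto intro!: sum_ennreal nn)
  also have "\<dots> = ennreal (infsum f A)"
    by (rule infsum_nonneg_is_SUPREMUM_ennreal[symmetric]) (use sm nn in auto)
  finally show "?S = ennreal (infsum f A)" .
qed

lemma gdct:
  fixes F H :: "nat \<Rightarrow> 'g \<Rightarrow> real" and f :: "'g \<Rightarrow> real"
  assumes fs: "f summable_on A" and fnn: "\<And>x. x \<in> A \<Longrightarrow> f x \<ge> 0"
    and Fs: "eventually (\<lambda>k. F k summable_on A) sequentially"
    and Fnn: "\<And>k x. x \<in> A \<Longrightarrow> F k x \<ge> 0"
    and Fpt: "\<And>x. x \<in> A \<Longrightarrow> (\<lambda>k. F k x) \<longlonglongrightarrow> f x"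
    and Fsum: "(\<lambda>k. infsum (F k) A) \<longlonglongrightarrow> infsum f A"
    and Hb: "\<And>k x. x \<in> A \<Longrightarrow> 0 \<le> H k x \<and> H k x \<le> 4 * (F k x + f x)"
    and Hpt: "\<And>x. x \<in> A \<Longrightarrow> (\<lambda>k. H k x) \<longlonglongrightarrow> 0"
  shows "eventually (\<lambda>k. H k summable_on A) sequentially" and "(\<lambda>k. infsum (H k) A) \<longlonglongrightarrow> 0"
proof -
  have Hs: "H k summable_on A" if "F k summable_on A" for k
  proof (rule summable_on_comparison_test)
    show "(\<lambda>x. 4 * (F k x + f x)) summable_on A"
      by (intro summable_on_cmult_right summable_on_add that fs)
  qed (use Hb in auto)
  show "eventually (\<lambda>k. H k summable_on A) sequentially" using Fs Hs eventually_mono by force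
  show "(\<lambda>k. infsum (H k) A) \<longlonglongrightarrow> 0"
  proof (rule tendstoI)
    fix \<epsilon> :: real assume \<epsilon>: "\<epsilon> > 0"
    define e where "e = \<epsilon> / 20"
    have e: "e > 0" using \<epsilon> by (simp add: e_def)
    obtain B where B: "finite B" "B \<subseteq> A" "dist (sum f B) (infsum f A) \<le> e"
      using infsum_finite_approximation[OF fs e] by auto
    have split: "infsum g A = sum g B + infsum g (A - B)" if "g summable_on A" for g :: "'g \<Rightarrow> real"
    proof -
      have "A = B \<union> (A - B)" using B by auto
      hence "infsum g A = infsum g (B \<union> (A - B))" by simp
      also have "\<dots> = infsum g B + infsum g (A - B)"
        by (rule infsum_Un_disjoint) (use B in \<open>auto intro: summable_on_subset_banach[OF that]\<close>)
      finally show ?thesis using B by simp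
    qed
    have tailf: "infsum f (A - B) \<le> e" using split[OF fs] B(3) by (simp add: dist_real_def)
    have T: "(\<lambda>k. infsum (F k) A - sum (F k) B) \<longlonglongrightarrow> infsum f A - sum f B"
      by (intro tendsto_diff Fsum tendsto_sum) (use B Fpt in auto)
    have ev1: "eventually (\<lambda>k. infsum (F k) A - sum (F k) B < 2 * e) sequentially"
      by (rule order_tendstoD(2)[OF T]) (use tailf split[OF fs] e in auto)
    have ev2: "eventually (\<lambda>k. sum (H k) B < e) sequentially"
      by (rule order_tendstoD(2)[OF tendsto_null_sum]) (use B Hpt e in auto)
    show "eventually (\<lambda>k. dist (infsum (H k) A) 0 < \<epsilon>) sequentially"
      using ev1 ev2 Fs
    proof eventually_elim
      case (elim k)
      have sk: "H k summable_on A" using Hs elim(3) .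
      have tF: "infsum (F k) (A - B) < 2 * e" using elim(1) split[OF elim(3)] by simp
      have fsub: "f summable_on (A - B)" using fs summable_on_subset_banach by blast
      have Fsub: "F k summable_on (A - B)" using elim(3) summable_on_subset_banach by blast
      have s1: "H k summable_on (A - B)" by (rule summable_on_subset_banach[OF sk]) auto
      have s2: "(\<lambda>x. 4 * (F k x + f x)) summable_on (A - B)"
        by (intro summable_on_cmult_right summable_on_add Fsub fsub)
      have "infsum (H k) (A - B) \<le> infsum (\<lambda>x. 4 * (F k x + f x)) (A - B)"
        by (rule infsum_mono[OF s1 s2]) (use Hb in auto)
      also have "\<dots> = 4 * (infsum (F k) (A - B) + infsum f (A - B))"
        unfolding infsum_cmult_right' by (simp only: infsum_add[OF Fsub fsub])
      finally have "infsum (H k) (A - B) \<le> 4 * (infsum (F k) (A - B) + infsum f (A - B))" .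
      hence "infsum (H k) (A - B) \<le> 4 * infsum (F k) (A - B) + 4 * infsum f (A - B)" by (simp add: distrib_left)
      hence "infsum (H k) A < 13 * e" using split[OF sk] elim(2) tF tailf by linarith
      moreover have "13 * e < \<epsilon>" using \<epsilon> by (simp add: e_def)
      ultimately have "infsum (H k) A < \<epsilon>" by linarith
      moreover have "infsum (H k) A \<ge> 0" using Hb by (intro infsum_nonneg) auto
      ultimately show ?case by (simp add: dist_real_def)
    qed
  qed
qed


lemma powbound:
  fixes a b p :: real
  assumes "1 \<le> p" "p \<le> 2"
  shows "\<bar>a - b\<bar> powr p \<le> 4 * (\<bar>b\<bar> powr p + \<bar>a\<bar> powr p)"
proof -
  let ?m = "max \<bar>a\<bar> \<bar>b\<bar>"
  have "\<bar>a - b\<bar> \<le> 2 * ?m" by auto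
  hence "\<bar>a - b\<bar> powr p \<le> (2 * ?m) powr p" by (intro powr_mono2) (use assms in auto)
  also have "\<dots> = 2 powr p * ?m powr p" by (simp add: powr_mult)
  also have "\<dots> \<le> 4 * ?m powr p"
  proof (rule mult_right_mono)
    have "(2::real) powr p \<le> 2 powr 2" by (rule powr_mono) (use assms in auto)
    thus "(2::real) powr p \<le> 4" by simp
  qed simp
  also have "?m powr p \<le> \<bar>b\<bar> powr p + \<bar>a\<bar> powr p"
    by (cases "\<bar>a\<bar> \<le> \<bar>b\<bar>") (auto simp: max_def)
  hence "4 * ?m powr p \<le> 4 * (\<bar>b\<bar> powr p + \<bar>a\<bar> powr p)" by simp
  finally show ?thesis .
qed

theorem lemma6p16:
  fixes phi :: "'g \<Rightarrow> 'a::{real_inner, complete_space}"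
    and Gam :: "'g set"
    and n :: nat
    and Gs :: "nat \<Rightarrow> 'g set"
    and ps :: "nat \<Rightarrow> real"
    and p w :: "'g \<Rightarrow> real"
    and c :: real
    and vk :: "nat \<Rightarrow> 'a" and v :: 'a
  assumes onb: "orthonormal_basis phi Gam"
    and Gs_union: "(\<Union>i<n. Gs i) = Gam"
    and Gs_disj: "\<forall>i<n. \<forall>j<n. i \<noteq> j \<longrightarrow> Gs i \<inter> Gs j = {}"
    and ps_range: "\<forall>i<n. 1 \<le> ps i \<and> ps i \<le> 2"
    and p_def: "\<forall>i<n. \<forall>g\<in>Gs i. p g = ps i"
    and c_pos: "c > 0"
    and w_ge: "\<forall>g\<in>Gam. w g \<ge> c"
    and weak: "weakly_converges vk v"
    and fin: "wnorm w p phi Gam v < \<infinity>"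
    and lim: "(\<lambda>k. wnorm w p phi Gam (vk k)) \<longlonglongrightarrow> wnorm w p phi Gam v"
  shows "(\<lambda>k. norm (v - vk k)) \<longlonglongrightarrow> 0"
proof -
  have pG: "1 \<le> p g \<and> p g \<le> 2" if gG: "g \<in> Gam" for g
  proof -
    obtain i where "i < n" "g \<in> Gs i" using gG Gs_union by auto
    thus ?thesis using p_def ps_range by auto
  qed
  have wpos: "w g \<ge> c" "w g > 0" if "g \<in> Gam" for g using w_ge c_pos that by force+
  define cf where "cf x g = w g * \<bar>x \<bullet> phi g\<bar> powr p g" for x g
  have cfnn: "cf x g \<ge> 0" if "g \<in> Gam" for x g
    unfolding cf_def using wpos[OF that] by simp
  have wn: "wnorm w p phi Gam x = (\<Sum>\<^sub>\<infinity>g\<in>Gam. ennreal (cf x g))" for x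
    unfolding wnorm_def cf_def by simp
  have fs: "cf v summable_on Gam" and fv: "wnorm w p phi Gam v = ennreal (infsum (cf v) Gam)"
    using enn_fin[of Gam "cf v"] cfnn fin unfolding wn by auto
  have evfin: "eventually (\<lambda>k. wnorm w p phi Gam (vk k) < \<infinity>) sequentially"
    by (rule order_tendstoD(2)[OF lim fin])
  have evF: "eventually (\<lambda>k. cf (vk k) summable_on Gam \<and>
      wnorm w p phi Gam (vk k) = ennreal (infsum (cf (vk k)) Gam)) sequentially"
    using evfin
  proof eventually_elim
    case (elim k)
    thus ?case using enn_fin[of Gam "cf (vk k)"] cfnn unfolding wn by auto
  qed
  have Fs: "eventually (\<lambda>k. cf (vk k) summable_on Gam) sequentially"
    using evF by (rule eventually_mono) simp
  have Fsum: "(\<lambda>k. infsum (cf (vk k)) Gam) \<longlonglongrightarrow> infsum (cf v) Gam"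
  proof (rule tendsto_ennrealD)
    have "(\<lambda>k. wnorm w p phi Gam (vk k)) \<longlonglongrightarrow> ennreal (infsum (cf v) Gam)"
      using lim fv by simp
    moreover have "eventually (\<lambda>k. wnorm w p phi Gam (vk k) = ennreal (infsum (cf (vk k)) Gam)) sequentially"
      using evF by (rule eventually_mono) simp
    ultimately show "(\<lambda>k. ennreal (infsum (cf (vk k)) Gam)) \<longlonglongrightarrow> ennreal (infsum (cf v) Gam)"
      using tendsto_cong by fastforce
  qed (use cfnn in \<open>auto intro!: infsum_nonneg always_eventually\<close>)
  have coef: "(\<lambda>k. vk k \<bullet> phi g) \<longlonglongrightarrow> v \<bullet> phi g" for g
    using weak unfolding weakly_converges_def by blast
  have Fpt: "(\<lambda>k. cf (vk k) g) \<longlonglongrightarrow> cf v g" if "g \<in> Gam" for g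
    unfolding cf_def
    by (intro tendsto_mult_left tendsto_powr' tendsto_rabs coef tendsto_const) (use pG[OF that] in auto)
  define H where "H k g = w g * \<bar>(v - vk k) \<bullet> phi g\<bar> powr p g" for k g
  have Hb: "0 \<le> H k g \<and> H k g \<le> 4 * (cf (vk k) g + cf v g)" if "g \<in> Gam" for k g
  proof
    show "0 \<le> H k g" unfolding H_def using wpos[OF that] by simp
    have "\<bar>(v - vk k) \<bullet> phi g\<bar> powr p g \<le> 4 * (\<bar>vk k \<bullet> phi g\<bar> powr p g + \<bar>v \<bullet> phi g\<bar> powr p g)"
      unfolding inner_diff_left by (rule powbound) (use pG[OF that] in auto)
    hence "w g * \<bar>(v - vk k) \<bullet> phi g\<bar> powr p g \<le> w g * (4 * (\<bar>vk k \<bullet> phi g\<bar> powr p g + \<bar>v \<bullet> phi g\<bar> powr p g))"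
      using wpos[OF that] by (intro mult_left_mono) auto
    thus "H k g \<le> 4 * (cf (vk k) g + cf v g)" unfolding H_def cf_def by (simp add: algebra_simps)
  qed
  have Hpt: "(\<lambda>k. H k g) \<longlonglongrightarrow> 0" if "g \<in> Gam" for g
  proof -
    have "(\<lambda>k. (v - vk k) \<bullet> phi g) \<longlonglongrightarrow> v \<bullet> phi g - v \<bullet> phi g"
      unfolding inner_diff_left by (intro tendsto_diff tendsto_const coef)
    hence "(\<lambda>k. \<bar>(v - vk k) \<bullet> phi g\<bar>) \<longlonglongrightarrow> 0" using tendsto_rabs_zero by fastforce
    hence "(\<lambda>k. \<bar>(v - vk k) \<bullet> phi g\<bar> powr p g) \<longlonglongrightarrow> 0"
      by (rule tendsto_zero_powrI) (use pG[OF that] in auto)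
    thus ?thesis unfolding H_def using tendsto_mult_left[of _ 0 _ "w g"] by fastforce
  qed
  have Hs: "eventually (\<lambda>k. H k summable_on Gam) sequentially"
    and Hsum: "(\<lambda>k. infsum (H k) Gam) \<longlonglongrightarrow> 0"
    using gdct[of "cf v" Gam "\<lambda>k. cf (vk k)" H, OF fs cfnn Fs cfnn Fpt Fsum Hb Hpt] by auto
  have evc: "eventually (\<lambda>k. infsum (H k) Gam < c) sequentially"
    by (rule order_tendstoD(2)[OF Hsum c_pos])
  have evn: "eventually (\<lambda>k. norm (norm (v - vk k)) \<le> sqrt (infsum (H k) Gam / c)) sequentially"
    using evc Hs
  proof eventually_elim
    case (elim k)
    let ?d = "\<lambda>g. (v - vk k) \<bullet> phi g"
    have b: "c * (?d g)^2 \<le> H k g" if g: "g \<in> Gam" for g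
    proof -
      have "H k g = infsum (H k) {g}" by simp
      also have "\<dots> \<le> infsum (H k) Gam"
        by (rule infsum_mono_neutral) (use g elim(2) Hb in auto)
      finally have "H k g < c" using elim(1) by simp
      hence lt: "w g * \<bar>?d g\<bar> powr p g < c" unfolding H_def by simp
      have "\<bar>?d g\<bar> powr p g < 1"
      proof (rule ccontr)
        assume "\<not> \<bar>?d g\<bar> powr p g < 1"
        hence "w g * 1 \<le> w g * \<bar>?d g\<bar> powr p g" using wpos[OF g] by (intro mult_left_mono) auto
        thus False using lt wpos[OF g] by linarith
      qed
      hence t1: "\<bar>?d g\<bar> \<le> 1" using ge_one_powr_ge_zero[of "\<bar>?d g\<bar>" "p g"] pG[OF g]
        by (cases "\<bar>?d g\<bar> \<le> 1") auto
      have "(?d g)^2 = \<bar>?d g\<bar> powr 2" by simp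
      also have "\<dots> \<le> \<bar>?d g\<bar> powr p g" by (rule powr_mono') (use pG[OF g] t1 in auto)
      finally have "(?d g)^2 \<le> \<bar>?d g\<bar> powr p g" .
      hence "c * (?d g)^2 \<le> w g * \<bar>?d g\<bar> powr p g"
        using wpos[OF g] c_pos by (intro mult_mono) auto
      thus ?thesis unfolding H_def .
    qed
    have b': "(?d g)^2 \<le> H k g / c" if "g \<in> Gam" for g
      using b[OF that] c_pos by (simp add: field_simps)
    have Hc: "(\<lambda>g. H k g / c) summable_on Gam"
      using summable_on_cmult_right[OF elim(2), of "1/c"] by simp
    have ds: "(\<lambda>g. (?d g)^2) summable_on Gam"
      by (rule summable_on_comparison_test[OF Hc]) (use b' in auto)
    have "(norm (v - vk k))^2 \<le> infsum (\<lambda>g. (?d g)^2) Gam" by (rule parseval_le[OF onb ds])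
    also have "\<dots> \<le> infsum (\<lambda>g. H k g / c) Gam" by (rule infsum_mono[OF ds Hc]) (use b' in auto)
    also have "\<dots> = infsum (H k) Gam / c"
      using infsum_cmult_right'[of "1/c" "H k" Gam] by simp
    finally show ?case by (simp add: real_le_rsqrt)
  qed
  have "(\<lambda>k. sqrt (infsum (H k) Gam / c)) \<longlonglongrightarrow> 0"
    using tendsto_real_sqrt[OF tendsto_divide_zero[OF Hsum, of c]] by simp
  from Lim_null_comparison[OF evn this] show ?thesis .
qed

end
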